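(* Let $S$ be a state of a $d$-dimensional Hegselmann–Krause system with social network $G=(V,E)$ and confidence bound $\varepsilon>0$, with influence network $(V,E_I)$, and let $e=\{u,w\}\in E_I$ with $x_u\ne x_w$. Let $\bar S_e$ be the projected state along $e$. Then: (1) $\|x_u-x_w\|_2=|\bar x_u-\bar x_w|$; (2) $N_v=\bar N_v$ for every $v\in V$; (3) $\sum_{v\in V}|N_v|\,\|m_v\|_2\ \ge\ \sum_{v\in V}|\bar N_v|\,|\bar m_v|$.
   Context: A $d$-dimensional Hegselmann–Krause system has a finite undirected graph $G=(V,E)$ (social network), a confidence bound $\varepsilon>0$, and a state given by positions $x_v\in\mathbb{R}^d$, $v\in V$. In a state, the influencing neighborhood of $v$ is $N_v=\{u:\{u,v\}\in E,\ \|x_u-x_v\|_2\le\varepsilon\}\cup\{v\}$, the movement of $v$ is $m_v=\frac{1}{|N_v|}\sum_{u\in N_v}(x_u-x_v)$, and the influence network is $(V,E_I)$ with $E_I=\{\{u,v\}\in E:\|x_u-x_v\|_2\le\varepsilon\}$. For an edge $e=\{u,w\}\in E_I$, let $p=(x_u-x_w)/\|x_u-x_w\|_2$ (the order of $u,w$ chosen arbitrarily). The projected state $\bar S_e$ is the state of the $1$-dimensional HKS with social network $(V,E_I)$, the same confidence bound $\varepsilon$, and positions $\bar x_v=x_v^\top p\in\mathbb{R}$. In $\bar S_e$, $\bar N_v=\{u:\{u,v\}\in E_I,\ |\bar x_u-\bar x_v|\le\varepsilon\}\cup\{v\}$ and $\bar m_v=\frac{1}{|\bar N_v|}\sum_{u\in\bar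 N_v}(\bar x_u-\bar x_v)$. *)

theory Defs
  imports "HOL-Analysis.Analysis"
begin

text \<open>A Hegselmann-Krause system: a finite social network (V, E), where E is a set of
  2-element subsets of V, a confidence bound eps, and positions x in a real normed
  vector space (R^d for the d-dimensional system, the reals for the 1-dimensional one).\<close>

definition social_network :: "'v set \<Rightarrow> 'v set set \<Rightarrow> bool" where
  "social_network V E \<longleftrightarrow> finite V \<and>
     (\<forall>e\<in>E. \<exists>a b. a \<in> V \<and> b \<in> V \<and> a \<noteq> b \<and> e = {a, b})"

definition nbhd :: "'v set \<Rightarrow> 'v set set \<Rightarrow> real \<Rightarrow> ('v \<Rightarrow> 'a::real_normed_vector) \<Rightarrow> 'v \<Rightarrow> 'v set" where
  "nbhd V E eps x v = {u \<in> V. {u, v} \<in> E \<and> norm (x u - x v) \<le> eps} \<union> {v}"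

definition movement :: "'v set \<Rightarrow> 'v set set \<Rightarrow> real \<Rightarrow> ('v \<Rightarrow> 'a::real_normed_vector) \<Rightarrow> 'v \<Rightarrow> 'a" where
  "movement V E eps x v =
     (1 / real (card (nbhd V E eps x v))) *\<^sub>R (\<Sum>u\<in>nbhd V E eps x v. x u - x v)"

definition influence_edges :: "'v set \<Rightarrow> 'v set set \<Rightarrow> real \<Rightarrow> ('v \<Rightarrow> 'a::real_normed_vector) \<Rightarrow> 'v set set" where
  "influence_edges V E eps x = {e \<in> E. \<forall>a b. e = {a, b} \<longrightarrow> norm (x a - x b) \<le> eps}"

definition proj_pos :: "('v \<Rightarrow> 'a::real_inner) \<Rightarrow> 'v \<Rightarrow> 'v \<Rightarrow> 'v \<Rightarrow> real" where
  "proj_pos x u w v = x v \<bullet> ((1 / norm (x u - x w)) *\<^sub>R (x u - x w))"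

end

theory Submission
  imports Defs
begin

theorem lemma1:
  fixes V :: "'v set" and E :: "'v set set" and eps :: real
    and x :: "'v \<Rightarrow> 'a::euclidean_space" and u w :: 'v
  assumes "social_network V E"
    and "eps > 0"
    and "{u, w} \<in> influence_edges V E eps x"
    and "x u \<noteq> x w"
  shows "norm (x u - x w) = \<bar>proj_pos x u w u - proj_pos x u w w\<bar>
    \<and> (\<forall>v\<in>V. nbhd V E eps x v
                = nbhd V (influence_edges V E eps x) eps (proj_pos x u w) v)
    \<and> ((\<Sum>v\<in>V. real (card (nbhd V E eps x v)) * norm (movement V E eps x v))
         \<ge> (\<Sum>v\<in>V. real (card (nbhd V (influence_edges V E eps x) eps (proj_pos x u w) v))
                     * \<bar>movement V (influence_edges V E eps x) eps (proj_pos x u w) v\<bar>))"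
proof -
  define p where "p = (1 / norm (x u - x w)) *\<^sub>R (x u - x w)"
  have np: "norm p = 1" using assms(4) by (simp add: p_def)
  have pp: "\<And>v. proj_pos x u w v = x v \<bullet> p" by (simp add: proj_pos_def p_def)
  have bnd: "\<And>a b. \<bar>proj_pos x u w a - proj_pos x u w b\<bar> \<le> norm (x a - x b)"
  proof -
    fix a b
    have "\<bar>proj_pos x u w a - proj_pos x u w b\<bar> = \<bar>(x a - x b) \<bullet> p\<bar>"
      by (simp add: pp inner_diff_left)
    also have "\<dots> \<le> norm (x a - x b) * norm p" by (rule Cauchy_Schwarz_ineq2)
    finally show "\<bar>proj_pos x u w a - proj_pos x u w b\<bar> \<le> norm (x a - x b)" using np by simp
  qed
  have P1: "norm (x u - x w) = \<bar>proj_pos x u w u - proj_pos x u w w\<bar>"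
  proof -
    have "proj_pos x u w u - proj_pos x u w w = (x u - x w) \<bullet> p"
      by (simp add: pp inner_diff_left)
    also have "\<dots> = norm (x u - x w)" using assms(4)
      by (simp add: p_def power2_norm_eq_inner[symmetric] power2_eq_square)
    finally show ?thesis by simp
  qed
  have ie: "\<And>a b. {a, b} \<in> influence_edges V E eps x \<longleftrightarrow> {a, b} \<in> E \<and> norm (x a - x b) \<le> eps"
    unfolding influence_edges_def
    by (auto simp: doubleton_eq_iff norm_minus_commute)
  have P2: "\<forall>v\<in>V. nbhd V E eps x v
                = nbhd V (influence_edges V E eps x) eps (proj_pos x u w) v"
    unfolding nbhd_def using ie bnd by (fastforce simp: real_norm_def intro: order_trans)
  have mv: "movement V (influence_edges V E eps x) eps (proj_pos x u w) v = movement V E eps x v \<bullet> p"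
    if "v \<in> V" for v
    using P2 that unfolding movement_def
    by (simp add: pp inner_sum_left inner_diff_left)
  have P3: "\<And>v. v \<in> V \<Longrightarrow> real (card (nbhd V (influence_edges V E eps x) eps (proj_pos x u w) v))
                     * \<bar>movement V (influence_edges V E eps x) eps (proj_pos x u w) v\<bar>
          \<le> real (card (nbhd V E eps x v)) * norm (movement V E eps x v)"
  proof -
    fix v assume v: "v \<in> V"
    have "\<bar>movement V E eps x v \<bullet> p\<bar> \<le> norm (movement V E eps x v) * norm p"
      by (rule Cauchy_Schwarz_ineq2)
    then show "?thesis v" using P2 v mv[OF v] np by (simp add: mult_left_mono)
  qed
  have S: "(\<Sum>v\<in>V. real (card (nbhd V (influence_edges V E eps x) eps (proj_pos x u w) v))
                     * \<bar>movement V (influence_edges V E eps x) eps (proj_pos x u w) v\<bar>)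
     \<le> (\<Sum>v\<in>V. real (card (nbhd V E eps x v)) * norm (movement V E eps x v))"
    by (rule sum_mono) (rule P3)
  show ?thesis using P1 P2 S by blast
qed

end
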